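(* Let $c\ge0$. Let $w^*$ be an optimal solution, with optimal value $\lambda_n^*$, of $$\min_{w,\lambda_n}\ \lambda_n\quad\text{s.t.}\quad \sum_{\{i,j\}\in E_3}w_{ij}L_{ij}+L_0-\lambda_nI\preceq 0,\ \ \sum_{\{i,j\}\in E_3}w_{ij}\ge c,\ \ w_{ij}\ge0,$$ and let $(\xi,v_1,\dots,v_n)$ be an optimal solution of the embedding problem $$\max_{v_i\in\mathbb{R}^n,\ \xi\in\mathbb{R}}\ c\xi+\sum_{\{i,j\}\in E_1\cup E_2}\|v_i-v_j\|^2\quad\text{s.t.}\quad \|v_i-v_j\|^2\ge\xi\ \ \forall\{i,j\}\in E_3,\ \ \sum_{i\in V}\|v_i\|^2=1.$$ Then for every $p\in\mathbb{R}^n$ the projected vector $y=(p^Tv_1,\dots,p^Tv_n)^T$ satisfies $L(w^* )y=\lambda_n^*y$, where $L(w^* )=\sum_{\{i,j\}\in E_3}w^*_{ij}L_{ij}+L_0$; i.e. projecting the optimal embedding onto a one-dimensional subspace yields an eigenvector for the largest eigenvalue $\lambda_n^*$.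
   Context: A multiplex network consists of two layers $G_1=(V_1,E_1)$ and $G_2=(V_2,E_2)$, simple undirected graphs with $|V_1|=|V_2|=N$; vertices of $G_1$ are numbered $1,\dots,N$, those of $G_2$ are numbered $N+1,\dots,2N$, $n=2N$, $V=V_1\cup V_2$. The interlayer edges form the perfect matching $E_3=\{\{i,N+i\}:i=1,\dots,N\}$ with nonnegative weights $w_{ij}$. $L_{ij}=(\delta_i-\delta_j)(\delta_i-\delta_j)^T$, $\delta_i$ the $i$-th standard basis vector of $\mathbb{R}^n$; $L_0=\sum_{\{i,j\}\in E_1\cup E_2}L_{ij}$. *)

theory Defs
  imports Complex_Main
begin

text \<open>Vertices are the naturals 1..n with n = 2N; layer 1 is {1..N},
layer 2 is {N+1..2N}. Vectors of R^m are functions nat => real, used on indices {1..m};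
n x n matrices are functions nat => nat => real, used on {1..n} x {1..n}.
An undirected edge {i,j} of a simple graph is represented by the ordered pair (i,j) with i < j.
Interlayer edge {i, N+i} carries weight w i.\<close>

definition delta :: "nat \<Rightarrow> nat \<Rightarrow> real" where
  "delta i a = (if a = i then 1 else 0)"

definition Lij :: "nat \<Rightarrow> nat \<Rightarrow> nat \<Rightarrow> nat \<Rightarrow> real" where
  "Lij i j a b = (delta i a - delta j a) * (delta i b - delta j b)"

definition simple_graph_on :: "nat set \<Rightarrow> (nat \<times> nat) set \<Rightarrow> bool" where
  "simple_graph_on V E \<longleftrightarrow> (\<forall>(i,j)\<in>E. i \<in> V \<and> j \<in> V \<and> i < j)"

definition L0 :: "(nat \<times> nat) set \<Rightarrow> (nat \<times> nat) set \<Rightarrow> nat \<Rightarrow> nat \<Rightarrow> real" where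
  "L0 E1 E2 a b = (\<Sum>(i,j)\<in>E1 \<union> E2. Lij i j a b)"

definition Lw :: "nat \<Rightarrow> (nat \<times> nat) set \<Rightarrow> (nat \<times> nat) set \<Rightarrow> (nat \<Rightarrow> real) \<Rightarrow> nat \<Rightarrow> nat \<Rightarrow> real" where
  "Lw N E1 E2 w a b = (\<Sum>i\<in>{1..N}. w i * Lij i (N + i) a b) + L0 E1 E2 a b"

definition nsd :: "nat \<Rightarrow> (nat \<Rightarrow> nat \<Rightarrow> real) \<Rightarrow> bool" where
  "nsd m A \<longleftrightarrow> (\<forall>x :: nat \<Rightarrow> real. (\<Sum>a\<in>{1..m}. \<Sum>b\<in>{1..m}. x a * A a b * x b) \<le> 0)"

definition idm :: "nat \<Rightarrow> nat \<Rightarrow> real" where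
  "idm a b = (if a = b then 1 else 0)"

definition primal_feasible ::
  "nat \<Rightarrow> (nat \<times> nat) set \<Rightarrow> (nat \<times> nat) set \<Rightarrow> real \<Rightarrow> (nat \<Rightarrow> real) \<Rightarrow> real \<Rightarrow> bool" where
  "primal_feasible N E1 E2 c w lam \<longleftrightarrow>
     nsd (2*N) (\<lambda>a b. Lw N E1 E2 w a b - lam * idm a b) \<and>
     (\<Sum>i\<in>{1..N}. w i) \<ge> c \<and> (\<forall>i\<in>{1..N}. w i \<ge> 0)"

definition primal_optimal ::
  "nat \<Rightarrow> (nat \<times> nat) set \<Rightarrow> (nat \<times> nat) set \<Rightarrow> real \<Rightarrow> (nat \<Rightarrow> real) \<Rightarrow> real \<Rightarrow> bool" where
  "primal_optimal N E1 E2 c w lam \<longleftrightarrow> primal_feasible N E1 E2 c w lam \<and>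
     (\<forall>w' lam'. primal_feasible N E1 E2 c w' lam' \<longrightarrow> lam \<le> lam')"

definition sqdist :: "nat \<Rightarrow> (nat \<Rightarrow> real) \<Rightarrow> (nat \<Rightarrow> real) \<Rightarrow> real" where
  "sqdist m x y = (\<Sum>k\<in>{1..m}. (x k - y k)^2)"

definition sqnorm :: "nat \<Rightarrow> (nat \<Rightarrow> real) \<Rightarrow> real" where
  "sqnorm m x = (\<Sum>k\<in>{1..m}. (x k)^2)"

definition embed_feasible ::
  "nat \<Rightarrow> real \<Rightarrow> (nat \<Rightarrow> nat \<Rightarrow> real) \<Rightarrow> bool" where
  "embed_feasible N xi v \<longleftrightarrow>
     (\<forall>i\<in>{1..N}. sqdist (2*N) (v i) (v (N + i)) \<ge> xi) \<and>
     (\<Sum>i\<in>{1..2*N}. sqnorm (2*N) (v i)) = 1"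

definition embed_obj ::
  "nat \<Rightarrow> (nat \<times> nat) set \<Rightarrow> (nat \<times> nat) set \<Rightarrow> real \<Rightarrow> real \<Rightarrow> (nat \<Rightarrow> nat \<Rightarrow> real) \<Rightarrow> real" where
  "embed_obj N E1 E2 c xi v = c * xi + (\<Sum>(i,j)\<in>E1 \<union> E2. sqdist (2*N) (v i) (v j))"

definition embed_optimal ::
  "nat \<Rightarrow> (nat \<times> nat) set \<Rightarrow> (nat \<times> nat) set \<Rightarrow> real \<Rightarrow> real \<Rightarrow> (nat \<Rightarrow> nat \<Rightarrow> real) \<Rightarrow> bool" where
  "embed_optimal N E1 E2 c xi v \<longleftrightarrow> embed_feasible N xi v \<and>
     (\<forall>xi' v'. embed_feasible N xi' v' \<longrightarrow> embed_obj N E1 E2 c xi' v' \<le> embed_obj N E1 E2 c xi v)"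

end

theory Submission
  imports Defs "HOL-Analysis.Analysis"
begin


lemma dep_exists:
  fixes u :: "nat \<Rightarrow> nat \<Rightarrow> real"
  shows "finite J \<Longrightarrow> card J > m \<Longrightarrow> (\<forall>k\<in>J. \<forall>a. a \<notin> {1..m} \<longrightarrow> u k a = 0) \<Longrightarrow>
     \<exists>q. (\<exists>k\<in>J. q k \<noteq> 0) \<and> (\<forall>a. (\<Sum>k\<in>J. q k * u k a) = 0)"
proof (induction m arbitrary: J u)
  case 0
  then obtain k0 where k0: "k0 \<in> J" by fastforce
  let ?q = "\<lambda>k. if k = k0 then 1 else (0::real)"
  have "(\<Sum>k\<in>J. ?q k * u k a) = 0" for a
    using 0 by simp
  then show ?case using 0 k0 by (intro exI[of _ ?q]) auto
next
  case (Suc m)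
  show ?case
  proof (cases "\<forall>k\<in>J. u k (Suc m) = 0")
    case True
    have "\<forall>k\<in>J. \<forall>a. a \<notin> {1..m} \<longrightarrow> u k a = 0"
      using Suc.prems(3) True by (metis atLeastAtMost_iff le_Suc_eq)
    then show ?thesis using Suc.IH[of J u] Suc.prems by auto
  next
    case False
    then obtain j where j: "j \<in> J" "u j (Suc m) \<noteq> 0" by blast
    define J' where "J' = J - {j}"
    define u' where "u' = (\<lambda>k a. u k a - (u k (Suc m) / u j (Suc m)) * u j a)"
    have cJ': "card J' > m" "finite J'" using Suc.prems j unfolding J'_def by auto
    have "\<forall>k\<in>J'. \<forall>a. a \<notin> {1..m} \<longrightarrow> u' k a = 0"
    proof (intro ballI allI impI)
      fix k a assume k: "k \<in> J'" and a: "a \<notin> {1..m}"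
      show "u' k a = 0"
      proof (cases "a = Suc m")
        case True thus ?thesis using j unfolding u'_def by simp
      next
        case False
        hence "a \<notin> {1..Suc m}" using a by auto
        thus ?thesis using Suc.prems(3) k j unfolding u'_def J'_def by auto
      qed
    qed
    from Suc.IH[OF cJ'(2) cJ'(1) this] obtain q' where
      q': "\<exists>k\<in>J'. q' k \<noteq> 0" "\<forall>a. (\<Sum>k\<in>J'. q' k * u' k a) = 0" by blast
    define q where "q = (\<lambda>k. if k = j then - (\<Sum>l\<in>J'. q' l * u l (Suc m)) / u j (Suc m) else q' k)"
    have "(\<Sum>k\<in>J. q k * u k a) = 0" for a
    proof -
      have "(\<Sum>k\<in>J. q k * u k a) = q j * u j a + (\<Sum>k\<in>J'. q k * u k a)"
        using j Suc.prems(1) unfolding J'_def by (simp add: sum.remove)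
      also have "(\<Sum>k\<in>J'. q k * u k a) = (\<Sum>k\<in>J'. q' k * u k a)"
        unfolding q_def J'_def by (intro sum.cong) auto
      also have "q j * u j a = - (\<Sum>l\<in>J'. q' l * u l (Suc m) / u j (Suc m) * u j a)"
        unfolding q_def by (simp add: sum_divide_distrib sum_distrib_right)
      finally have "(\<Sum>k\<in>J. q k * u k a) = (\<Sum>k\<in>J'. q' k * u' k a)"
        unfolding u'_def by (simp add: sum_subtractf[symmetric] algebra_simps)
      thus ?thesis using q'(2) by simp
    qed
    moreover have "\<exists>k\<in>J. q k \<noteq> 0" using q'(1) unfolding q_def J'_def by auto
    ultimately show ?thesis by blast
  qed
qed

lemma householder:
  fixes x y u :: "nat \<Rightarrow> real"
  assumes "(\<Sum>k\<in>J. u k * u k) \<noteq> 0"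
  shows "(\<Sum>k\<in>J. (x k - 2 * (\<Sum>l\<in>J. x l * u l) * u k / (\<Sum>k\<in>J. u k * u k)) *
                 (y k - 2 * (\<Sum>l\<in>J. y l * u l) * u k / (\<Sum>k\<in>J. u k * u k)))
         = (\<Sum>k\<in>J. x k * y k)"
proof -
  define U where "U = (\<Sum>k\<in>J. u k * u k)"
  define ax where "ax = (\<Sum>l\<in>J. x l * u l)"
  define ay where "ay = (\<Sum>l\<in>J. y l * u l)"
  have pt: "(x k - 2 * ax * u k / U) * (y k - 2 * ay * u k / U) =
      x k * y k - (2 * ay / U) * (x k * u k) - (2 * ax / U) * (y k * u k) + (4 * ax * ay / (U*U)) * (u k * u k)" for k
    by (simp add: algebra_simps power2_eq_square)
  have "(\<Sum>k\<in>J. (x k - 2 * ax * u k / U) * (y k - 2 * ay * u k / U))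
     = (\<Sum>k\<in>J. x k * y k) - 2 * ay / U * (\<Sum>k\<in>J. x k * u k)
       - 2 * ax / U * (\<Sum>k\<in>J. y k * u k) + 4 * ax * ay / (U*U) * U"
  proof -
    have "(\<Sum>k\<in>J. (x k - 2 * ax * u k / U) * (y k - 2 * ay * u k / U)) =
      (\<Sum>k\<in>J. x k * y k - (2 * ay / U) * (x k * u k) - (2 * ax / U) * (y k * u k) + (4 * ax * ay / (U*U)) * (u k * u k))"
      by (simp only: pt)
    also have "\<dots> = (\<Sum>k\<in>J. x k * y k) - 2 * ay / U * (\<Sum>k\<in>J. x k * u k)
       - 2 * ax / U * (\<Sum>k\<in>J. y k * u k) + 4 * ax * ay / (U*U) * (\<Sum>k\<in>J. u k * u k)"
      by (simp only: sum.distrib sum_subtractf sum_distrib_left)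
    finally show ?thesis unfolding U_def by simp
  qed
  also have "\<dots> = (\<Sum>k\<in>J. x k * y k)"
    using assms unfolding U_def[symmetric] ax_def[symmetric] ay_def[symmetric] by (simp add: field_simps)
  finally show ?thesis unfolding U_def ax_def ay_def .
qed

lemma gram_reduce:
  fixes W :: "nat \<Rightarrow> nat \<Rightarrow> real"
  assumes "finite J"
  shows "\<exists>V. \<forall>i\<in>{1..m}. \<forall>j\<in>{1..m}. (\<Sum>k\<in>{1..m}. V i k * V j k) = (\<Sum>k\<in>J. W i k * W j k)"
  using assms
proof (induction "card J" arbitrary: J W rule: less_induct)
  case less
  show ?case
  proof (cases "card J \<le> m")
    case True
    obtain h where h: "bij_betw h {1..card J} J" using ex_bij_betw_nat_finite_1[OF less.prems] by blast
    define V where "V = (\<lambda>i k. if k \<in> {1..card J} then W i (h k) else 0)"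
    have "(\<Sum>k\<in>{1..m}. V i k * V j k) = (\<Sum>k\<in>J. W i k * W j k)" for i j
    proof -
      have "(\<Sum>k\<in>{1..m}. V i k * V j k) = (\<Sum>k\<in>{1..card J}. V i k * V j k)"
        using True by (intro sum.mono_neutral_right) (auto simp: V_def)
      also have "\<dots> = (\<Sum>k\<in>{1..card J}. W i (h k) * W j (h k))" by (simp add: V_def)
      also have "\<dots> = (\<Sum>k\<in>J. W i k * W j k)" using sum.reindex_bij_betw[OF h, of "\<lambda>k. W i k * W j k"] .
      finally show ?thesis .
    qed
    thus ?thesis by blast
  next
    case False
    define u where "u = (\<lambda>k a. if a \<in> {1..m} then W a k else 0)"
    obtain q where q: "\<exists>k\<in>J. q k \<noteq> 0" "\<forall>a. (\<Sum>k\<in>J. q k * u k a) = 0"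
    proof -
      have "\<forall>k\<in>J. \<forall>a. a \<notin> {1..m} \<longrightarrow> u k a = 0" unfolding u_def by simp
      from dep_exists[OF less.prems _ this] False show ?thesis using that by auto
    qed
    have qW: "(\<Sum>k\<in>J. W a k * q k) = 0" if "a \<in> {1..m}" for a
      using q(2)[rule_format, of a] that unfolding u_def by (simp add: mult.commute)
    obtain k0 where k0: "k0 \<in> J" using q(1) by blast
    obtain k1 where k1: "k1 \<in> J" "q k1 \<noteq> 0" using q(1) by blast
    define s where "s = sqrt (\<Sum>k\<in>J. q k * q k)"
    have "0 < q k1 * q k1" using k1(2) not_real_square_gt_zero by blast
    also have "q k1 * q k1 \<le> (\<Sum>k\<in>J. q k * q k)"
      by (rule member_le_sum) (use k1 less.prems in auto)
    finally have qpos: "(\<Sum>k\<in>J. q k * q k) > 0" .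
    hence s: "s > 0" "s * s = (\<Sum>k\<in>J. q k * q k)" unfolding s_def
      by (auto simp del: real_sqrt_mult_self simp add: real_sqrt_mult[symmetric])
    define uh where "uh = (\<lambda>k. q k - (if k = k0 then s else 0))"
    define U where "U = (\<Sum>k\<in>J. uh k * uh k)"
    have U_eq: "U = 2 * s * (s - q k0)"
    proof -
      have "U = uh k0 * uh k0 + (\<Sum>k\<in>J-{k0}. uh k * uh k)"
        unfolding U_def using k0 less.prems by (simp add: sum.remove)
      also have "(\<Sum>k\<in>J-{k0}. uh k * uh k) = (\<Sum>k\<in>J-{k0}. q k * q k)"
        unfolding uh_def by (intro sum.cong) auto
      also have "(\<Sum>k\<in>J-{k0}. q k * q k) = s * s - q k0 * q k0"
        using s(2) k0 less.prems by (simp add: sum.remove)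
      finally show ?thesis unfolding uh_def by (simp add: algebra_simps)
    qed
    have alpha: "(\<Sum>l\<in>J. W a l * uh l) = - s * W a k0" if a: "a \<in> {1..m}" for a
    proof -
      have "(\<Sum>l\<in>J. W a l * uh l) = (\<Sum>l\<in>J. W a l * q l) - (\<Sum>l\<in>J. if l = k0 then W a l * s else 0)"
        unfolding uh_def by (simp add: sum_subtractf[symmetric] right_diff_distrib if_distrib cong: if_cong)
      also have "\<dots> = - s * W a k0" using qW[OF a] k0 less.prems by (simp add: sum.delta)
      finally show ?thesis .
    qed
    obtain W' where W': "\<forall>a\<in>{1..m}. W' a k0 = 0"
      "\<forall>a\<in>{1..m}. \<forall>b\<in>{1..m}. (\<Sum>k\<in>J. W' a k * W' b k) = (\<Sum>k\<in>J. W a k * W b k)"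
    proof (cases "U = 0")
      case True
      hence "\<forall>k\<in>J. uh k * uh k = 0" unfolding U_def
        using sum_nonneg_eq_0_iff[OF less.prems, of "\<lambda>k. uh k * uh k"] by simp
      hence "\<forall>k\<in>J. uh k = 0" by simp
      hence "\<forall>a\<in>{1..m}. W a k0 = 0" using alpha s(1) by simp
      thus ?thesis using that[of W] by blast
    next
      case False
      define W' where "W' = (\<lambda>a k. W a k - 2 * (\<Sum>l\<in>J. W a l * uh l) * uh k / U)"
      have "\<forall>a\<in>{1..m}. W' a k0 = 0"
      proof
        fix a assume a: "a \<in> {1..m}"
        have "s - q k0 \<noteq> 0" using False U_eq by auto
        have "W' a k0 = W a k0 - 2 * (- s * W a k0) * uh k0 / U"
          unfolding W'_def using alpha[OF a] by simp
        also have "\<dots> = 0" unfolding U_eq uh_def using s(1) \<open>s - q k0 \<noteq> 0\<close>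
          by (simp add: field_simps)
        finally show "W' a k0 = 0" .
      qed
      moreover have "\<forall>a\<in>{1..m}. \<forall>b\<in>{1..m}. (\<Sum>k\<in>J. W' a k * W' b k) = (\<Sum>k\<in>J. W a k * W b k)"
        unfolding W'_def U_def using householder[where J=J and u=uh] False unfolding U_def by auto
      ultimately show ?thesis using that by blast
    qed
    have lt: "card (J - {k0}) < card J" using k0 less.prems by (meson card_Diff1_less)
    obtain V where V: "\<forall>i\<in>{1..m}. \<forall>j\<in>{1..m}. (\<Sum>k\<in>{1..m}. V i k * V j k) = (\<Sum>k\<in>J-{k0}. W' i k * W' j k)"
      using less.hyps[OF lt, of W'] less.prems by auto
    have "\<forall>i\<in>{1..m}. \<forall>j\<in>{1..m}. (\<Sum>k\<in>{1..m}. V i k * V j k) = (\<Sum>k\<in>J. W i k * W j k)"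
    proof (intro ballI)
      fix i j assume ij: "i \<in> {1..m}" "j \<in> {1..m}"
      have "(\<Sum>k\<in>J. W' i k * W' j k) = W' i k0 * W' j k0 + (\<Sum>k\<in>J-{k0}. W' i k * W' j k)"
        using k0 less.prems by (simp add: sum.remove)
      thus "(\<Sum>k\<in>{1..m}. V i k * V j k) = (\<Sum>k\<in>J. W i k * W j k)"
        using V W' ij by simp
    qed
    thus ?thesis by blast
  qed
qed

lemma gram_conv:
  fixes V1 V2 :: "nat \<Rightarrow> nat \<Rightarrow> real"
  assumes th: "0 \<le> \<theta>" "\<theta> \<le> 1"
  shows "\<exists>V. \<forall>i\<in>{1..m}. \<forall>j\<in>{1..m}. (\<Sum>k\<in>{1..m}. V i k * V j k) =
     (1 - \<theta>) * (\<Sum>k\<in>{1..m}. V1 i k * V1 j k) + \<theta> * (\<Sum>k\<in>{1..m}. V2 i k * V2 j k)"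
proof -
  define W where "W = (\<lambda>i k. if k \<le> m then sqrt (1 - \<theta>) * V1 i k else sqrt \<theta> * V2 i (k - m))"
  obtain V where V: "\<forall>i\<in>{1..m}. \<forall>j\<in>{1..m}. (\<Sum>k\<in>{1..m}. V i k * V j k) = (\<Sum>k\<in>{1..m} \<union> {1+m..m+m}. W i k * W j k)"
    using gram_reduce[of "{1..m} \<union> {1+m..m+m}" m W] by auto
  have "(\<Sum>k\<in>{1..m} \<union> {1+m..m+m}. W i k * W j k) =
     (1 - \<theta>) * (\<Sum>k\<in>{1..m}. V1 i k * V1 j k) + \<theta> * (\<Sum>k\<in>{1..m}. V2 i k * V2 j k)" for i j
  proof -
    have "(\<Sum>k\<in>{1..m} \<union> {1+m..m+m}. W i k * W j k) = (\<Sum>k\<in>{1..m}. W i k * W j k) + (\<Sum>k\<in>{1+m..m+m}. W i k * W j k)"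
      by (intro sum.union_disjoint) auto
    also have "(\<Sum>k\<in>{1+m..m+m}. W i k * W j k) = (\<Sum>k\<in>{1..m}. W i (k+m) * W j (k+m))"
      by (rule sum.shift_bounds_cl_nat_ivl)
    also have "\<dots> = (\<Sum>k\<in>{1..m}. \<theta> * (V2 i k * V2 j k))"
      unfolding W_def using th by (intro sum.cong) (auto simp: algebra_simps)
    also have "(\<Sum>k\<in>{1..m}. W i k * W j k) = (\<Sum>k\<in>{1..m}. (1 - \<theta>) * (V1 i k * V1 j k))"
      unfolding W_def using th by (intro sum.cong) (auto simp: algebra_simps)
    finally show ?thesis by (simp add: sum_distrib_left)
  qed
  thus ?thesis using V by auto
qed

lemma maxsq_le:
  fixes a x :: real
  shows "(max (a - x) 0)^2 \<le> (max a 0 - x)^2"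
proof (cases "a - x \<ge> 0")
  case True
  show ?thesis
  proof (cases "a \<ge> 0")
    case True thus ?thesis using \<open>a - x \<ge> 0\<close> by simp
  next
    case False
    hence "0 \<le> a - x" "a - x \<le> - x" using True by auto
    hence "(a - x)^2 \<le> (-x)^2" by (intro power_mono) auto
    thus ?thesis using True False by simp
  qed
next
  case False thus ?thesis by simp
qed

lemma sep:
  fixes \<phi> :: "'v \<Rightarrow> nat \<Rightarrow> real" and M :: "nat set"
  assumes fin: "finite M" and dpos: "\<delta> > 0"
    and conv: "\<And>V1 V2 \<theta>. V1 \<in> G \<Longrightarrow> V2 \<in> G \<Longrightarrow> 0 \<le> \<theta> \<Longrightarrow> \<theta> \<le> 1 \<Longrightarrow>
                 \<exists>V\<in>G. \<forall>i\<in>M. \<phi> V i = (1 - \<theta>) * \<phi> V1 i + \<theta> * \<phi> V2 i"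
    and V0: "V0 \<in> G"
    and mn: "\<And>V. V \<in> G \<Longrightarrow> (\<Sum>i\<in>M. (max (\<delta> - \<phi> V0 i) 0)^2) \<le> (\<Sum>i\<in>M. (max (\<delta> - \<phi> V i) 0)^2)"
    and dual: "\<And>V. V \<in> G \<Longrightarrow> \<exists>i\<in>M. \<phi> V i \<le> 0"
  shows "\<exists>w. (\<forall>i\<in>M. w i \<ge> 0) \<and> (\<Sum>i\<in>M. w i) = 1 \<and> (\<forall>V\<in>G. (\<Sum>i\<in>M. w i * \<phi> V i) \<le> \<delta>)"
proof -
  define u where "u = (\<lambda>i. max (\<delta> - \<phi> V0 i) 0)"
  have u0: "u i \<ge> 0" for i unfolding u_def by simp
  obtain i0 where i0: "i0 \<in> M" "\<phi> V0 i0 \<le> 0" using dual[OF V0] by blast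
  have "0 < u i0" using i0 dpos unfolding u_def by simp
  also have "u i0 \<le> (\<Sum>i\<in>M. u i)" by (rule member_le_sum) (use i0 fin u0 in auto)
  finally have su: "(\<Sum>i\<in>M. u i) > 0" .
  have key: "(\<Sum>i\<in>M. u i * (\<phi> V i - \<phi> V0 i)) \<le> 0" if V: "V \<in> G" for V
  proof (rule ccontr)
    define b where "b = (\<lambda>i. \<phi> V i - \<phi> V0 i)"
    define S where "S = (\<Sum>i\<in>M. u i * b i)"
    define B where "B = (\<Sum>i\<in>M. b i * b i)"
    assume "\<not> (\<Sum>i\<in>M. u i * (\<phi> V i - \<phi> V0 i)) \<le> 0"
    hence S: "S > 0" unfolding S_def b_def by simp
    have B: "B \<ge> 0" unfolding B_def by (intro sum_nonneg) auto
    define t where "t = min 1 (S / (B + 1))"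
    have t: "0 < t" "t \<le> 1" "t * B < 2 * S"
    proof -
      show "0 < t" "t \<le> 1" unfolding t_def using S B by auto
      have "t * B \<le> S / (B + 1) * B" unfolding t_def using B by (intro mult_right_mono) auto
      also have "\<dots> < S" using S B by (simp add: field_simps)
      finally show "t * B < 2 * S" using S by simp
    qed
    obtain Vt where Vt: "Vt \<in> G" "\<forall>i\<in>M. \<phi> Vt i = (1 - t) * \<phi> V0 i + t * \<phi> V i"
      using conv[OF V0 V, of t] t by auto
    have "(\<Sum>i\<in>M. (u i)^2) \<le> (\<Sum>i\<in>M. (max (\<delta> - \<phi> Vt i) 0)^2)"
      using mn[OF Vt(1)] unfolding u_def .
    also have "\<dots> \<le> (\<Sum>i\<in>M. (u i - t * b i)^2)"
    proof (intro sum_mono)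
      fix i assume i: "i \<in> M"
      have e: "\<delta> - \<phi> Vt i = (\<delta> - \<phi> V0 i) - t * b i" using Vt(2) i unfolding b_def by (simp add: algebra_simps)
      show "(max (\<delta> - \<phi> Vt i) 0)^2 \<le> (u i - t * b i)^2" unfolding u_def e by (rule maxsq_le)
    qed
    also have "\<dots> = (\<Sum>i\<in>M. (u i)^2) - 2 * t * S + t * t * B"
      unfolding S_def B_def
      by (simp add: power2_eq_square algebra_simps sum.distrib sum_subtractf sum_distrib_left)
    finally have "2 * t * S \<le> t * t * B" by simp
    hence "2 * S \<le> t * B" using t(1) by (simp add: mult.assoc)
    thus False using t(3) by simp
  qed
  define w where "w = (\<lambda>i. u i / (\<Sum>i\<in>M. u i))"
  have "(\<Sum>i\<in>M. w i * \<phi> V i) \<le> \<delta>" if V: "V \<in> G" for V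
  proof -
    have "(\<Sum>i\<in>M. u i * \<phi> V i) \<le> (\<Sum>i\<in>M. u i * \<phi> V0 i)"
      using key[OF V] by (simp add: algebra_simps sum_subtractf)
    also have "\<dots> \<le> (\<Sum>i\<in>M. \<delta> * u i)"
    proof (intro sum_mono)
      fix i
      show "u i * \<phi> V0 i \<le> \<delta> * u i"
      proof (cases "\<phi> V0 i \<le> \<delta>")
        case True
        hence "u i = \<delta> - \<phi> V0 i" unfolding u_def by simp
        thus ?thesis using True by (simp add: mult_right_mono mult.commute)
      next
        case False thus ?thesis unfolding u_def by simp
      qed
    qed
    finally have "(\<Sum>i\<in>M. u i * \<phi> V i) \<le> \<delta> * (\<Sum>i\<in>M. u i)" by (simp add: sum_distrib_left)
    thus ?thesis unfolding w_def using su
      by (simp add: sum_divide_distrib[symmetric] field_simps)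
  qed
  moreover have "(\<Sum>i\<in>M. w i) = 1" unfolding w_def using su by (simp add: sum_divide_distrib[symmetric])
  moreover have "\<forall>i\<in>M. w i \<ge> 0" unfolding w_def using su u0 by simp
  ultimately show ?thesis by blast
qed



definition QF :: "nat \<Rightarrow> (nat \<Rightarrow> nat \<Rightarrow> real) \<Rightarrow> (nat \<Rightarrow> real) \<Rightarrow> real" where
  "QF m A x = (\<Sum>a\<in>{1..m}. \<Sum>b\<in>{1..m}. x a * A a b * x b)"

lemma nsd_QF: "nsd m A \<longleftrightarrow> (\<forall>x. QF m A x \<le> 0)"
  unfolding nsd_def QF_def ..

lemma sd1: "finite S \<Longrightarrow> a \<in> S \<Longrightarrow> (\<Sum>b\<in>S. f b * (if b = a then 1 else 0)) = (f a::real)"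
proof -
  assume "finite S" "a \<in> S"
  have "(\<Sum>b\<in>S. f b * (if b = a then 1 else 0)) = (\<Sum>b\<in>S. if b = a then f b else 0)"
    by (intro sum.cong) auto
  thus ?thesis using \<open>finite S\<close> \<open>a \<in> S\<close> by (simp add: sum.delta')
qed

lemma sd2: "finite S \<Longrightarrow> a \<in> S \<Longrightarrow> (\<Sum>b\<in>S. f b * (if a = b then 1 else 0)) = (f a::real)"
  using sd1[of S a f] by (simp add: eq_commute)

lemma lin_delta: "(\<Sum>a\<in>{1..m}. x a * (delta i a - delta j a)) = x i - x j"
  if "i \<in> {1..m}" "j \<in> {1..m}"
proof -
  have "(\<Sum>a\<in>{1..m}. x a * (delta i a - delta j a)) =
     (\<Sum>a\<in>{1..m}. x a * delta i a) - (\<Sum>a\<in>{1..m}. x a * delta j a)"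
    by (simp add: sum_subtractf[symmetric] right_diff_distrib)
  also have "\<dots> = x i - x j" using that unfolding delta_def by (simp add: sd1)
  finally show ?thesis .
qed

lemma QF_Lij: "i \<in> {1..m} \<Longrightarrow> j \<in> {1..m} \<Longrightarrow> QF m (Lij i j) x = (x i - x j)^2"
proof -
  assume ij: "i \<in> {1..m}" "j \<in> {1..m}"
  have "QF m (Lij i j) x = (\<Sum>a\<in>{1..m}. x a * (delta i a - delta j a)) * (\<Sum>b\<in>{1..m}. x b * (delta i b - delta j b))"
    unfolding QF_def Lij_def sum_product by (intro sum.cong refl) (simp add: algebra_simps)
  thus ?thesis using lin_delta[OF ij] by (simp add: power2_eq_square)
qed

lemma QF_add: "QF m (\<lambda>a b. A a b + B a b) x = QF m A x + QF m B x"
  unfolding QF_def by (simp add: algebra_simps sum.distrib)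

lemma QF_diff: "QF m (\<lambda>a b. A a b - B a b) x = QF m A x - QF m B x"
  unfolding QF_def by (simp add: algebra_simps sum_subtractf)

lemma QF_scale: "QF m (\<lambda>a b. c * A a b) x = c * QF m A x"
  unfolding QF_def by (simp add: algebra_simps sum_distrib_left)

lemma QF_sum: "QF m (\<lambda>a b. \<Sum>e\<in>E. F e a b) x = (\<Sum>e\<in>E. QF m (F e) x)"
  unfolding QF_def by (simp add: sum_distrib_left sum_distrib_right algebra_simps sum.swap[of _ E])

lemma QF_idm: "QF m idm x = (\<Sum>a\<in>{1..m}. (x a)^2)"
proof -
  have "(\<Sum>b\<in>{1..m}. x a * idm a b * x b) = (x a)^2" if "a \<in> {1..m}" for a
  proof -
    have "(\<Sum>b\<in>{1..m}. x a * idm a b * x b) = (\<Sum>b\<in>{1..m}. (x a * x b) * (if a = b then 1 else 0))"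
      by (intro sum.cong) (auto simp: idm_def)
    thus ?thesis using that by (simp add: sd2 power2_eq_square)
  qed
  thus ?thesis unfolding QF_def by (intro sum.cong) auto
qed

lemma QF_Lw:
  assumes E: "\<forall>(i,j)\<in>E1 \<union> E2. i \<in> {1..2*N} \<and> j \<in> {1..2*N}"
  shows "QF (2*N) (Lw N E1 E2 w) x = (\<Sum>(i,j)\<in>E1 \<union> E2. (x i - x j)^2) + (\<Sum>i\<in>{1..N}. w i * (x i - x (N+i))^2)"
proof -
  have L0: "L0 E1 E2 = (\<lambda>a b. \<Sum>e\<in>E1 \<union> E2. Lij (fst e) (snd e) a b)"
    unfolding L0_def by (simp add: split_def)
  have "QF (2*N) (L0 E1 E2) x = (\<Sum>e\<in>E1 \<union> E2. QF (2*N) (Lij (fst e) (snd e)) x)"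
    unfolding L0 QF_sum ..
  also have "\<dots> = (\<Sum>e\<in>E1 \<union> E2. (x (fst e) - x (snd e))^2)"
    using E by (intro sum.cong refl QF_Lij) auto
  finally have 1: "QF (2*N) (L0 E1 E2) x = (\<Sum>(i,j)\<in>E1 \<union> E2. (x i - x j)^2)" by (simp add: split_def)
  have "QF (2*N) (\<lambda>a b. \<Sum>i\<in>{1..N}. w i * Lij i (N + i) a b) x = (\<Sum>i\<in>{1..N}. QF (2*N) (\<lambda>a b. w i * Lij i (N+i) a b) x)"
    by (rule QF_sum)
  also have "\<dots> = (\<Sum>i\<in>{1..N}. w i * (x i - x (N+i))^2)"
    by (intro sum.cong refl) (simp add: QF_scale QF_Lij)
  finally have 2: "QF (2*N) (\<lambda>a b. \<Sum>i\<in>{1..N}. w i * Lij i (N + i) a b) x = (\<Sum>i\<in>{1..N}. w i * (x i - x (N+i))^2)" .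
  show ?thesis unfolding Lw_def QF_add 1 2 by simp
qed

lemma nsd_null:
  assumes nsd: "\<forall>y. QF m B y \<le> 0" and sym: "\<forall>a b. B a b = B b a"
    and x0: "QF m B x = 0" and a: "a \<in> {1..m}"
  shows "(\<Sum>b\<in>{1..m}. B a b * x b) = 0"
proof -
  define r where "r = (\<Sum>b\<in>{1..m}. B a b * x b)"
  define e where "e = (\<lambda>b. if b = a then (1::real) else 0)"
  have QFe: "QF m B (\<lambda>b. x b + t * e b) = QF m B x + 2 * t * r + t * t * B a a" for t
  proof -
    have pt: "(x a' + t * e a') * B a' b * (x b + t * e b) =
       x a' * B a' b * x b + t * (x a' * B a' b * e b) + t * (e a' * B a' b * x b) + t * t * (e a' * B a' b * e b)" for a' b
      by (simp add: algebra_simps)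
    have e1: "(\<Sum>b\<in>{1..m}. f b * e b) = f a" for f
      unfolding e_def using a by (simp add: sd1)
    have e2: "(\<Sum>b\<in>{1..m}. e b * f b) = f a" for f
      using e1[of f] by (simp add: mult.commute)
    have s1: "(\<Sum>a'\<in>{1..m}. \<Sum>b\<in>{1..m}. x a' * B a' b * e b) = r"
    proof -
      have "(\<Sum>a'\<in>{1..m}. \<Sum>b\<in>{1..m}. x a' * B a' b * e b) = (\<Sum>a'\<in>{1..m}. x a' * B a' a)"
        by (simp only: e1)
      also have "\<dots> = r" unfolding r_def using sym by (simp add: mult.commute)
      finally show ?thesis .
    qed
    have s2: "(\<Sum>a'\<in>{1..m}. \<Sum>b\<in>{1..m}. e a' * B a' b * x b) = r"
    proof -
      have "(\<Sum>a'\<in>{1..m}. \<Sum>b\<in>{1..m}. e a' * B a' b * x b) = (\<Sum>a'\<in>{1..m}. e a' * (\<Sum>b\<in>{1..m}. B a' b * x b))"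
        by (simp add: sum_distrib_left mult.assoc)
      also have "\<dots> = r" unfolding r_def by (rule e2)
      finally show ?thesis .
    qed
    have s3: "(\<Sum>a'\<in>{1..m}. \<Sum>b\<in>{1..m}. e a' * B a' b * e b) = B a a"
    proof -
      have "(\<Sum>a'\<in>{1..m}. \<Sum>b\<in>{1..m}. e a' * B a' b * e b) = (\<Sum>a'\<in>{1..m}. e a' * B a' a)"
        by (simp only: e1)
      also have "\<dots> = B a a" by (rule e2)
      finally show ?thesis .
    qed
    have "QF m B (\<lambda>b. x b + t * e b) = QF m B x + t * (\<Sum>a'\<in>{1..m}. \<Sum>b\<in>{1..m}. x a' * B a' b * e b)
      + t * (\<Sum>a'\<in>{1..m}. \<Sum>b\<in>{1..m}. e a' * B a' b * x b) + t * t * (\<Sum>a'\<in>{1..m}. \<Sum>b\<in>{1..m}. e a' * B a' b * e b)"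
      unfolding QF_def pt by (simp only: sum.distrib sum_distrib_left[symmetric])
    thus ?thesis unfolding s1 s2 s3 by simp
  qed
  have ineq: "2 * t * r + t * t * B a a \<le> 0" for t
    using nsd[rule_format, of "\<lambda>b. x b + t * e b"] QFe[of t] x0 by simp
  have beta: "B a a \<le> 0" using ineq[of 1] ineq[of "-1"] by simp
  define d where "d = 1 - B a a"
  have d: "d > 0" "B a a = 1 - d" unfolding d_def using beta by auto
  define t where "t = r / d"
  have "2 * t * r + t * t * B a a = r * r * (1 + d) / (d * d)"
    unfolding t_def d(2) using d(1) by (simp add: field_simps)
  hence "r * r * (1 + d) / (d * d) \<le> 0" using ineq[of t] by simp
  moreover have "d * d > 0" using d(1) by simp
  ultimately have "r * r * (1 + d) \<le> 0" by (simp add: divide_le_0_iff)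
  hence "r * r \<le> 0" using d(1) by (simp add: mult_le_0_iff)
  thus ?thesis unfolding r_def[symmetric] by (auto simp add: mult_le_0_iff)
qed



definition gram :: "nat \<Rightarrow> (nat \<Rightarrow> nat \<Rightarrow> real) \<Rightarrow> nat \<Rightarrow> nat \<Rightarrow> real" where
  "gram m V i j = (\<Sum>k\<in>{1..m}. V i k * V j k)"

lemma sqdist_gram: "sqdist m (V i) (V j) = gram m V i i - 2 * gram m V i j + gram m V j j"
  unfolding sqdist_def gram_def
  by (simp add: power2_eq_square algebra_simps sum.distrib sum_subtractf sum_distrib_left)

lemma sqnorm_gram: "sqnorm m (V i) = gram m V i i"
  unfolding sqnorm_def gram_def by (simp add: power2_eq_square)

definition nrm :: "nat \<Rightarrow> (nat \<Rightarrow> nat \<Rightarrow> real) \<Rightarrow> real" where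
  "nrm N V = (\<Sum>a\<in>{1..2*N}. sqnorm (2*N) (V a))"

definition Phi :: "nat \<Rightarrow> (nat \<times> nat) set \<Rightarrow> (nat \<times> nat) set \<Rightarrow> real \<Rightarrow> real \<Rightarrow> (nat \<Rightarrow> nat \<Rightarrow> real) \<Rightarrow> nat \<Rightarrow> real" where
  "Phi N E1 E2 c g V i = (\<Sum>e\<in>E1 \<union> E2. sqdist (2*N) (V (fst e)) (V (snd e)))
      + c * sqdist (2*N) (V i) (V (N+i)) - g * nrm N V"

definition GG :: "nat \<Rightarrow> (nat \<Rightarrow> nat \<Rightarrow> real) set" where
  "GG N = {V. (\<forall>i k. V i k \<in> (if i \<in> {1..2*N} \<and> k \<in> {1..2*N} then {-1..1} else {0})) \<and> nrm N V = 1}"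

lemma phi_conv:
  assumes Ebox: "\<forall>e\<in>E1 \<union> E2. fst e \<in> {1..2*N} \<and> snd e \<in> {1..2*N}"
    and i: "i \<in> {1..N}"
    and hg: "\<forall>a\<in>{1..2*N}. \<forall>b\<in>{1..2*N}. gram (2*N) V a b = (1 - \<theta>) * gram (2*N) V1 a b + \<theta> * gram (2*N) V2 a b"
  shows "Phi N E1 E2 c g V i = (1 - \<theta>) * Phi N E1 E2 c g V1 i + \<theta> * Phi N E1 E2 c g V2 i"
proof -
  have sd: "sqdist (2*N) (V a) (V b) = (1 - \<theta>) * sqdist (2*N) (V1 a) (V1 b) + \<theta> * sqdist (2*N) (V2 a) (V2 b)"
    if "a \<in> {1..2*N}" "b \<in> {1..2*N}" for a b
  proof -
    have "gram (2*N) V a a = (1 - \<theta>) * gram (2*N) V1 a a + \<theta> * gram (2*N) V2 a a"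
      "gram (2*N) V a b = (1 - \<theta>) * gram (2*N) V1 a b + \<theta> * gram (2*N) V2 a b"
      "gram (2*N) V b b = (1 - \<theta>) * gram (2*N) V1 b b + \<theta> * gram (2*N) V2 b b"
      using hg that by auto
    thus ?thesis unfolding sqdist_gram by (simp add: algebra_simps)
  qed
  have sn: "sqnorm (2*N) (V a) = (1 - \<theta>) * sqnorm (2*N) (V1 a) + \<theta> * sqnorm (2*N) (V2 a)"
    if "a \<in> {1..2*N}" for a
    unfolding sqnorm_gram using hg that by (simp add: algebra_simps)
  have 1: "(\<Sum>e\<in>E1 \<union> E2. sqdist (2*N) (V (fst e)) (V (snd e))) =
     (1 - \<theta>) * (\<Sum>e\<in>E1 \<union> E2. sqdist (2*N) (V1 (fst e)) (V1 (snd e))) + \<theta> * (\<Sum>e\<in>E1 \<union> E2. sqdist (2*N) (V2 (fst e)) (V2 (snd e)))"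
    unfolding sum_distrib_left sum.distrib[symmetric] using Ebox sd by (intro sum.cong) auto
  have 2: "nrm N V = (1 - \<theta>) * nrm N V1 + \<theta> * nrm N V2"
    unfolding nrm_def sum_distrib_left sum.distrib[symmetric] using sn by (intro sum.cong) auto
  have 3: "sqdist (2*N) (V i) (V (N+i)) = (1 - \<theta>) * sqdist (2*N) (V1 i) (V1 (N+i)) + \<theta> * sqdist (2*N) (V2 i) (V2 (N+i))"
    using i by (intro sd) auto
  show ?thesis unfolding Phi_def 1 2 3 by (simp add: algebra_simps)
qed

lemma inGG:
  assumes supp: "\<forall>i k. \<not> (i \<in> {1..2*N} \<and> k \<in> {1..2*N}) \<longrightarrow> V i k = 0" and n1: "nrm N V = 1"
  shows "V \<in> GG N"
proof -
  have "V i k \<in> {-1..1}" if ik: "i \<in> {1..2*N}" "k \<in> {1..2*N}" for i k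
  proof -
    have "(V i k)^2 \<le> sqnorm (2*N) (V i)" unfolding sqnorm_def
      by (rule member_le_sum) (use ik in auto)
    also have "\<dots> \<le> nrm N V" unfolding nrm_def
      by (rule member_le_sum) (use ik in \<open>auto simp: sqnorm_def intro: sum_nonneg\<close>)
    finally have "(V i k)^2 \<le> 1" using n1 by simp
    thus ?thesis using abs_square_le_1 by (auto simp: abs_le_iff)
  qed
  thus ?thesis unfolding GG_def using supp n1 by auto
qed

lemma GG_conv:
  assumes Ebox: "\<forall>e\<in>E1 \<union> E2. fst e \<in> {1..2*N} \<and> snd e \<in> {1..2*N}"
    and V1: "V1 \<in> GG N" and V2: "V2 \<in> GG N" and th: "0 \<le> \<theta>" "\<theta> \<le> 1"
  shows "\<exists>V\<in>GG N. \<forall>i\<in>{1..N}. Phi N E1 E2 c g V i = (1 - \<theta>) * Phi N E1 E2 c g V1 i + \<theta> * Phi N E1 E2 c g V2 i"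
proof -
  obtain V0 where V0: "\<forall>i\<in>{1..2*N}. \<forall>j\<in>{1..2*N}. (\<Sum>k\<in>{1..2*N}. V0 i k * V0 j k) =
     (1 - \<theta>) * (\<Sum>k\<in>{1..2*N}. V1 i k * V1 j k) + \<theta> * (\<Sum>k\<in>{1..2*N}. V2 i k * V2 j k)"
    using gram_conv[OF th, of "2*N" V1 V2] by blast
  define V where "V = (\<lambda>i k. if i \<in> {1..2*N} \<and> k \<in> {1..2*N} then V0 i k else 0)"
  have hg: "\<forall>a\<in>{1..2*N}. \<forall>b\<in>{1..2*N}. gram (2*N) V a b = (1 - \<theta>) * gram (2*N) V1 a b + \<theta> * gram (2*N) V2 a b"
  proof (intro ballI)
    fix a b assume ab: "a \<in> {1..2*N}" "b \<in> {1..2*N}"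
    have "gram (2*N) V a b = (\<Sum>k\<in>{1..2*N}. V0 a k * V0 b k)"
      unfolding gram_def V_def using ab by (intro sum.cong) auto
    thus "gram (2*N) V a b = (1 - \<theta>) * gram (2*N) V1 a b + \<theta> * gram (2*N) V2 a b"
      using V0 ab unfolding gram_def by simp
  qed
  have "nrm N V = (1 - \<theta>) * nrm N V1 + \<theta> * nrm N V2"
    unfolding nrm_def sqnorm_gram sum_distrib_left sum.distrib[symmetric] using hg by (intro sum.cong) auto
  hence "nrm N V = 1" using V1 V2 unfolding GG_def by simp
  hence "V \<in> GG N" by (intro inGG) (auto simp: V_def)
  thus ?thesis using phi_conv[OF Ebox _ hg] by blast
qed

lemma cont_coord [continuous_intros]: "continuous_on S (\<lambda>V::nat\<Rightarrow>nat\<Rightarrow>real. V a k)"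
proof -
  have "continuous_on UNIV (\<lambda>V::nat\<Rightarrow>nat\<Rightarrow>real. V a k)"
    by (rule continuous_on_product_then_coordinatewise[OF continuous_on_product_coordinates])
  thus ?thesis by (rule continuous_on_subset) auto
qed

lemma cont_sqdist [continuous_intros]: "continuous_on S (\<lambda>V::nat\<Rightarrow>nat\<Rightarrow>real. sqdist m (V a) (V b))"
  unfolding sqdist_def by (intro continuous_intros)

lemma cont_nrm [continuous_intros]: "continuous_on S (\<lambda>V. nrm N V)"
  unfolding nrm_def sqnorm_def by (intro continuous_intros)

lemma cont_Phi [continuous_intros]: "continuous_on S (\<lambda>V. Phi N E1 E2 c g V i)"
  unfolding Phi_def by (intro continuous_intros)

lemma compact_PiE_UNIV:
  fixes A :: "'i \<Rightarrow> 'b::topological_space set"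
  assumes "\<And>i. compact (A i)"
  shows "compact (PiE UNIV A)"
proof -
  have "compactin (product_topology (\<lambda>i. euclidean) UNIV) (PiE UNIV A)"
    using assms by (simp add: compactin_PiE)
  thus ?thesis by (simp add: euclidean_product_topology)
qed

lemma compact_GG: "compact (GG N)"
proof -
  define S where "S = (\<lambda>i k. if i \<in> {1..2*N} \<and> k \<in> {1..2*N} then {-1..1} else {0::real})"
  have cS: "compact (S i k)" for i k unfolding S_def by auto
  have "compact (PiE UNIV (\<lambda>i. PiE UNIV (S i)))"
    by (intro compact_PiE_UNIV cS)
  moreover have "PiE UNIV (\<lambda>i. PiE UNIV (S i)) = {V. \<forall>i k. V i k \<in> S i k}"
    by (auto simp: PiE_iff)
  ultimately have c1: "compact {V. \<forall>i k. V i k \<in> S i k}" by simp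
  have c2: "closed {V. nrm N V = 1}"
    by (rule closed_Collect_eq) (intro continuous_intros)+
  have "GG N = {V. \<forall>i k. V i k \<in> S i k} \<inter> {V. nrm N V = 1}"
    unfolding GG_def S_def by auto
  thus ?thesis using c1 c2 by auto
qed



lemma dual_prop:
  assumes N: "N > 0" and opt: "embed_optimal N E1 E2 c xi v" and V: "V \<in> GG N"
  shows "\<exists>i\<in>{1..N}. Phi N E1 E2 c (embed_obj N E1 E2 c xi v) V i \<le> 0"
proof -
  define D where "D = (\<lambda>i. sqdist (2*N) (V i) (V (N+i))) ` {1..N}"
  have D: "finite D" "D \<noteq> {}" unfolding D_def using N by auto
  define xi' where "xi' = Min D"
  obtain i0 where i0: "i0 \<in> {1..N}" "xi' = sqdist (2*N) (V i0) (V (N+i0))"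
    using Min_in[OF D] unfolding xi'_def D_def by auto
  have "embed_feasible N xi' V"
    unfolding embed_feasible_def
  proof
    show "\<forall>i\<in>{1..N}. xi' \<le> sqdist (2 * N) (V i) (V (N + i))"
      unfolding xi'_def D_def using D by (auto intro: Min_le)
    show "(\<Sum>i = 1..2 * N. sqnorm (2 * N) (V i)) = 1" using V unfolding GG_def nrm_def by simp
  qed
  hence "embed_obj N E1 E2 c xi' V \<le> embed_obj N E1 E2 c xi v"
    using opt unfolding embed_optimal_def by blast
  moreover have "Phi N E1 E2 c (embed_obj N E1 E2 c xi v) V i0 = embed_obj N E1 E2 c xi' V - embed_obj N E1 E2 c xi v"
    using V i0 unfolding Phi_def embed_obj_def GG_def by (simp add: split_def)
  ultimately have "Phi N E1 E2 c (embed_obj N E1 E2 c xi v) V i0 \<le> 0" by linarith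
  thus ?thesis using i0(1) by blast
qed

lemma QF_homog:
  assumes "\<forall>a\<in>{1..m}. x a = \<kappa> * y a"
  shows "QF m A x = \<kappa>^2 * QF m A y"
  unfolding QF_def sum_distrib_left using assms
  by (intro sum.cong refl) (auto simp: power2_eq_square algebra_simps)

lemma QF_zero:
  assumes "\<forall>a\<in>{1..m}. x a = 0"
  shows "QF m A x = 0"
  unfolding QF_def using assms by simp

lemma Lw_sym: "Lw N E1 E2 w a b = Lw N E1 E2 w b a"
proof -
  have "Lij i j a b = Lij i j b a" for i j unfolding Lij_def by simp
  thus ?thesis unfolding Lw_def L0_def by simp
qed



theorem proposition5:
  fixes N :: nat and E1 E2 :: "(nat \<times> nat) set" and c lam xi :: real
    and w :: "nat \<Rightarrow> real" and v :: "nat \<Rightarrow> nat \<Rightarrow> real"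
  assumes "simple_graph_on {1..N} E1"
    and "simple_graph_on {N+1..2*N} E2"
    and "c \<ge> 0"
    and "primal_optimal N E1 E2 c w lam"
    and "embed_optimal N E1 E2 c xi v"
  shows "\<forall>p :: nat \<Rightarrow> real. \<forall>a\<in>{1..2*N}.
           (\<Sum>b\<in>{1..2*N}. Lw N E1 E2 w a b * (\<Sum>k\<in>{1..2*N}. p k * v b k))
           = lam * (\<Sum>k\<in>{1..2*N}. p k * v a k)"
proof (cases "N = 0")
  case True thus ?thesis by simp
next
  case False
  hence N: "N > 0" by simp
  have Ebox: "\<forall>e\<in>E1 \<union> E2. fst e \<in> {1..2*N} \<and> snd e \<in> {1..2*N}"
    using assms(1,2) unfolding simple_graph_on_def by fastforce
  have Ebox2: "\<forall>(i,j)\<in>E1 \<union> E2. i \<in> {1..2*N} \<and> j \<in> {1..2*N}"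
    using assms(1,2) unfolding simple_graph_on_def by fastforce
  define g where "g = embed_obj N E1 E2 c xi v"
  have pf: "primal_feasible N E1 E2 c w lam"
    and pmin: "\<And>w' lam'. primal_feasible N E1 E2 c w' lam' \<Longrightarrow> lam \<le> lam'"
    using assms(4) unfolding primal_optimal_def by auto
  have ef: "embed_feasible N xi v" using assms(5) unfolding embed_optimal_def by auto
  have one: "1 \<in> {1..2*N}" using N by simp

  have strong: "lam \<le> g + \<delta>" if dpos: "\<delta> > 0" for \<delta>
  proof -
    define h where "h = (\<lambda>V. \<Sum>i\<in>{1..N}. (max (\<delta> - Phi N E1 E2 c g V i) 0)^2)"
    define Vr where "Vr = (\<lambda>i k. if i \<in> {1..2*N} \<and> k \<in> {1..2*N} then v i k else 0)"
    have "nrm N Vr = nrm N v"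
      unfolding nrm_def sqnorm_def Vr_def by (intro sum.cong refl) auto
    hence "nrm N Vr = 1" using ef unfolding embed_feasible_def nrm_def by simp
    hence "Vr \<in> GG N" by (intro inGG) (auto simp: Vr_def)
    hence ne: "GG N \<noteq> {}" by blast
    have "continuous_on (GG N) h" unfolding h_def by (intro continuous_intros)
    then obtain V0 where V0: "V0 \<in> GG N" "\<forall>V\<in>GG N. h V0 \<le> h V"
      using continuous_attains_inf[OF compact_GG ne] by blast
    obtain wd where wd: "\<forall>i\<in>{1..N}. wd i \<ge> 0" "(\<Sum>i\<in>{1..N}. wd i) = 1"
      "\<forall>V\<in>GG N. (\<Sum>i\<in>{1..N}. wd i * Phi N E1 E2 c g V i) \<le> \<delta>"
    proof -
      have "\<exists>w. (\<forall>i\<in>{1..N}. w i \<ge> 0) \<and> (\<Sum>i\<in>{1..N}. w i) = 1 \<and>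
              (\<forall>V\<in>GG N. (\<Sum>i\<in>{1..N}. w i * Phi N E1 E2 c g V i) \<le> \<delta>)"
      proof (rule sep[of "{1..N}" \<delta> "GG N" "Phi N E1 E2 c g" V0])
        show "finite {1..N}" by simp
        show "0 < \<delta>" by (rule dpos)
        show "\<exists>V\<in>GG N. \<forall>i\<in>{1..N}. Phi N E1 E2 c g V i = (1 - \<theta>) * Phi N E1 E2 c g V1 i + \<theta> * Phi N E1 E2 c g V2 i"
          if "V1 \<in> GG N" "V2 \<in> GG N" "0 \<le> \<theta>" "\<theta> \<le> 1" for V1 V2 \<theta>
          by (rule GG_conv[OF Ebox that])
        show "V0 \<in> GG N" by (rule V0(1))
        show "(\<Sum>i\<in>{1..N}. (max (\<delta> - Phi N E1 E2 c g V0 i) 0)\<^sup>2) \<le> (\<Sum>i\<in>{1..N}. (max (\<delta> - Phi N E1 E2 c g V i) 0)\<^sup>2)"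
          if "V \<in> GG N" for V using V0(2) that unfolding h_def by blast
        show "\<exists>i\<in>{1..N}. Phi N E1 E2 c g V i \<le> 0" if "V \<in> GG N" for V
          unfolding g_def by (rule dual_prop[OF N assms(5) that])
      qed
      thus ?thesis using that by blast
    qed
    have nsdq: "QF (2*N) (\<lambda>a b. Lw N E1 E2 (\<lambda>i. c * wd i) a b - (g + \<delta>) * idm a b) x \<le> 0" for x
    proof -
      define s where "s = (\<Sum>a\<in>{1..2*N}. (x a)^2)"
      show ?thesis
      proof (cases "s = 0")
        case True
        hence "\<forall>a\<in>{1..2*N}. (x a)^2 = 0" unfolding s_def
          using sum_nonneg_eq_0_iff[of "{1..2*N}" "\<lambda>a. (x a)^2"] by simp
        hence "\<forall>a\<in>{1..2*N}. x a = 0" by simp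
        thus ?thesis by (simp add: QF_zero)
      next
        case False
        have "s \<ge> 0" unfolding s_def by (intro sum_nonneg) auto
        hence spos: "s > 0" using False by simp
        define y where "y = (\<lambda>a. x a / sqrt s)"
        have hx: "\<forall>a\<in>{1..2*N}. x a = sqrt s * y a" unfolding y_def using spos by simp
        have sy: "(\<Sum>a\<in>{1..2*N}. (y a)^2) = 1"
        proof -
          have "(\<Sum>a\<in>{1..2*N}. (y a)^2) = (\<Sum>a\<in>{1..2*N}. (x a)^2) / s"
            unfolding y_def using spos by (simp add: power_divide sum_divide_distrib)
          thus ?thesis using spos unfolding s_def by simp
        qed
        define Vy :: "nat \<Rightarrow> nat \<Rightarrow> real" where "Vy = (\<lambda>a k. if a \<in> {1..2*N} \<and> k = 1 then y a else 0)"
        have sdy: "sqdist (2*N) (Vy a) (Vy b) = (y a - y b)^2" if "a \<in> {1..2*N}" "b \<in> {1..2*N}" for a b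
        proof -
          have "sqdist (2*N) (Vy a) (Vy b) = (\<Sum>k\<in>{1..2*N}. if k = 1 then (y a - y b)^2 else 0)"
            unfolding sqdist_def Vy_def using that by (intro sum.cong) auto
          thus ?thesis using one by (simp add: sum.delta)
        qed
        have "nrm N Vy = (\<Sum>a\<in>{1..2*N}. (y a)^2)"
        proof -
          have "sqnorm (2*N) (Vy a) = (y a)^2" if "a \<in> {1..2*N}" for a
          proof -
            have "sqnorm (2*N) (Vy a) = (\<Sum>k\<in>{1..2*N}. if k = 1 then (y a)^2 else 0)"
              unfolding sqnorm_def Vy_def using that by (intro sum.cong) auto
            thus ?thesis using one by (simp add: sum.delta)
          qed
          thus ?thesis unfolding nrm_def by (intro sum.cong) auto
        qed
        hence "nrm N Vy = 1" using sy by simp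
        hence VyG: "Vy \<in> GG N" by (intro inGG) (auto simp: Vy_def)
        define Q0 where "Q0 = (\<Sum>e\<in>E1 \<union> E2. (y (fst e) - y (snd e))^2)"
        have PhiVy: "Phi N E1 E2 c g Vy i = Q0 + c * (y i - y (N+i))^2 - g" if i: "i \<in> {1..N}" for i
        proof -
          have "(\<Sum>e\<in>E1 \<union> E2. sqdist (2*N) (Vy (fst e)) (Vy (snd e))) = Q0"
            unfolding Q0_def using Ebox sdy by (intro sum.cong) auto
          moreover have "sqdist (2*N) (Vy i) (Vy (N+i)) = (y i - y (N+i))^2" using i by (intro sdy) auto
          ultimately show ?thesis unfolding Phi_def using \<open>nrm N Vy = 1\<close> by simp
        qed
        have "(\<Sum>i\<in>{1..N}. wd i * Phi N E1 E2 c g Vy i) = (\<Sum>i\<in>{1..N}. wd i * (Q0 - g) + c * wd i * (y i - y (N+i))^2)"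
        proof (intro sum.cong refl)
          fix i assume i: "i \<in> {1..N}"
          show "wd i * Phi N E1 E2 c g Vy i = wd i * (Q0 - g) + c * wd i * (y i - y (N+i))^2"
            unfolding PhiVy[OF i] by (simp add: algebra_simps)
        qed
        also have "\<dots> = Q0 - g + (\<Sum>i\<in>{1..N}. c * wd i * (y i - y (N+i))^2)"
          using wd(2) by (simp add: sum.distrib sum_distrib_right[symmetric])
        finally have le: "Q0 - g + (\<Sum>i\<in>{1..N}. c * wd i * (y i - y (N+i))^2) \<le> \<delta>"
          using wd(3) VyG by auto
        have "QF (2*N) (\<lambda>a b. Lw N E1 E2 (\<lambda>i. c * wd i) a b - (g + \<delta>) * idm a b) y
            = QF (2*N) (Lw N E1 E2 (\<lambda>i. c * wd i)) y - (g + \<delta>) * QF (2*N) idm y"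
          by (simp add: QF_diff QF_scale)
        also have "\<dots> = Q0 + (\<Sum>i\<in>{1..N}. c * wd i * (y i - y (N+i))^2) - (g + \<delta>)"
          unfolding QF_Lw[OF Ebox2] QF_idm sy Q0_def by (simp add: split_def)
        finally have "QF (2*N) (\<lambda>a b. Lw N E1 E2 (\<lambda>i. c * wd i) a b - (g + \<delta>) * idm a b) y \<le> 0"
          using le by simp
        moreover have "QF (2*N) (\<lambda>a b. Lw N E1 E2 (\<lambda>i. c * wd i) a b - (g + \<delta>) * idm a b) x
            = (sqrt s)^2 * QF (2*N) (\<lambda>a b. Lw N E1 E2 (\<lambda>i. c * wd i) a b - (g + \<delta>) * idm a b) y"
          by (rule QF_homog[OF hx])
        ultimately show ?thesis using spos by (simp add: mult_nonneg_nonpos)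
      qed
    qed
    have "primal_feasible N E1 E2 c (\<lambda>i. c * wd i) (g + \<delta>)"
      unfolding primal_feasible_def nsd_QF
      using nsdq wd(1,2) assms(3) by (auto simp: sum_distrib_left[symmetric])
    thus ?thesis by (rule pmin)
  qed
  have lam_le: "lam \<le> g" using strong by (rule field_le_epsilon)

  define col where "col = (\<lambda>k a. v a k)"
  define q0 where "q0 = (\<Sum>e\<in>E1 \<union> E2. sqdist (2*N) (v (fst e)) (v (snd e)))"
  have T: "(\<Sum>k\<in>{1..2*N}. QF (2*N) (Lw N E1 E2 w) (col k)) =
      q0 + (\<Sum>i\<in>{1..N}. w i * sqdist (2*N) (v i) (v (N+i)))"
  proof -
    have "(\<Sum>k\<in>{1..2*N}. QF (2*N) (Lw N E1 E2 w) (col k)) =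
       (\<Sum>k\<in>{1..2*N}. (\<Sum>e\<in>E1 \<union> E2. (v (fst e) k - v (snd e) k)^2) + (\<Sum>i\<in>{1..N}. w i * (v i k - v (N+i) k)^2))"
      unfolding QF_Lw[OF Ebox2] col_def by (simp add: split_def)
    also have "\<dots> = (\<Sum>e\<in>E1 \<union> E2. \<Sum>k\<in>{1..2*N}. (v (fst e) k - v (snd e) k)^2) + (\<Sum>i\<in>{1..N}. w i * (\<Sum>k\<in>{1..2*N}. (v i k - v (N+i) k)^2))"
    proof -
      have "(\<Sum>k\<in>{1..2*N}. \<Sum>e\<in>E1 \<union> E2. (v (fst e) k - v (snd e) k)^2) = (\<Sum>e\<in>E1 \<union> E2. \<Sum>k\<in>{1..2*N}. (v (fst e) k - v (snd e) k)^2)"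
        by (rule sum.swap)
      moreover have "(\<Sum>k\<in>{1..2*N}. \<Sum>i\<in>{1..N}. w i * (v i k - v (N+i) k)^2) = (\<Sum>i\<in>{1..N}. \<Sum>k\<in>{1..2*N}. w i * (v i k - v (N+i) k)^2)"
        by (rule sum.swap)
      ultimately show ?thesis by (simp only: sum.distrib sum_distrib_left)
    qed
    finally show ?thesis unfolding q0_def sqdist_def .
  qed
  have Tidm: "(\<Sum>k\<in>{1..2*N}. QF (2*N) idm (col k)) = 1"
  proof -
    have "(\<Sum>k\<in>{1..2*N}. QF (2*N) idm (col k)) = (\<Sum>a\<in>{1..2*N}. sqnorm (2*N) (v a))"
      unfolding QF_idm col_def sqnorm_def by (rule sum.swap)
    thus ?thesis using ef unfolding embed_feasible_def by simp
  qed
  have wq: "c * xi \<le> (\<Sum>i\<in>{1..N}. w i * sqdist (2*N) (v i) (v (N+i)))"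
  proof -
    have w0: "\<forall>i\<in>{1..N}. w i \<ge> 0" and sw: "(\<Sum>i\<in>{1..N}. w i) \<ge> c"
      using pf unfolding primal_feasible_def by auto
    have dxi: "\<forall>i\<in>{1..N}. sqdist (2*N) (v i) (v (N+i)) \<ge> xi" using ef unfolding embed_feasible_def by auto
    have d0: "sqdist (2*N) (v i) (v (N+i)) \<ge> 0" for i unfolding sqdist_def by (intro sum_nonneg) auto
    show ?thesis
    proof (cases "xi \<le> 0")
      case True
      have "c * xi \<le> 0" using True assms(3) by (simp add: mult_nonneg_nonpos)
      also have "0 \<le> (\<Sum>i\<in>{1..N}. w i * sqdist (2*N) (v i) (v (N+i)))"
        using w0 d0 by (intro sum_nonneg) auto
      finally show ?thesis .
    next
      case False
      have "c * xi \<le> (\<Sum>i\<in>{1..N}. w i) * xi" using sw False by (intro mult_right_mono) auto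
      also have "\<dots> = (\<Sum>i\<in>{1..N}. w i * xi)" by (simp add: sum_distrib_right)
      also have "\<dots> \<le> (\<Sum>i\<in>{1..N}. w i * sqdist (2*N) (v i) (v (N+i)))"
        using w0 dxi by (intro sum_mono mult_left_mono) auto
      finally show ?thesis .
    qed
  qed
  have gq: "g = c * xi + q0" unfolding g_def embed_obj_def q0_def by (simp add: split_def)
  define B where "B = (\<lambda>a b. Lw N E1 E2 w a b - lam * idm a b)"
  have Bnsd: "\<forall>y. QF (2*N) B y \<le> 0" using pf unfolding primal_feasible_def nsd_QF B_def by auto
  have Bsym: "\<forall>a b. B a b = B b a" unfolding B_def idm_def using Lw_sym by auto
  have "(\<Sum>k\<in>{1..2*N}. QF (2*N) B (col k)) = (\<Sum>k\<in>{1..2*N}. QF (2*N) (Lw N E1 E2 w) (col k)) - lam * (\<Sum>k\<in>{1..2*N}. QF (2*N) idm (col k))"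
    unfolding B_def QF_diff QF_scale by (simp add: sum_subtractf sum_distrib_left)
  also have "\<dots> \<ge> 0" unfolding T Tidm using wq gq lam_le by simp
  finally have sumB: "(\<Sum>k\<in>{1..2*N}. QF (2*N) B (col k)) \<ge> 0" .
  have QB0: "QF (2*N) B (col k) = 0" if k: "k \<in> {1..2*N}" for k
  proof -
    have "(\<Sum>k\<in>{1..2*N}. - QF (2*N) B (col k)) \<le> 0" using sumB by (simp add: sum_negf)
    moreover have "(\<Sum>k\<in>{1..2*N}. - QF (2*N) B (col k)) \<ge> 0" using Bnsd by (intro sum_nonneg) auto
    ultimately have "(\<Sum>k\<in>{1..2*N}. - QF (2*N) B (col k)) = 0" by simp
    hence "\<forall>k\<in>{1..2*N}. - QF (2*N) B (col k) = 0"
      using sum_nonneg_eq_0_iff[of "{1..2*N}" "\<lambda>k. - QF (2*N) B (col k)"] Bnsd by auto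
    thus ?thesis using k by auto
  qed
  have eig: "(\<Sum>b\<in>{1..2*N}. Lw N E1 E2 w a b * v b k) = lam * v a k"
    if a: "a \<in> {1..2*N}" and k: "k \<in> {1..2*N}" for a k
  proof -
    have "(\<Sum>b\<in>{1..2*N}. B a b * col k b) = 0" by (rule nsd_null[OF Bnsd Bsym QB0[OF k] a])
    moreover have "(\<Sum>b\<in>{1..2*N}. B a b * col k b) = (\<Sum>b\<in>{1..2*N}. Lw N E1 E2 w a b * v b k) - lam * (\<Sum>b\<in>{1..2*N}. idm a b * v b k)"
      unfolding B_def col_def by (simp add: algebra_simps sum_subtractf sum_distrib_left)
    moreover have "(\<Sum>b\<in>{1..2*N}. idm a b * v b k) = v a k"
    proof -
      have "(\<Sum>b\<in>{1..2*N}. idm a b * v b k) = (\<Sum>b\<in>{1..2*N}. v b k * (if a = b then 1 else 0))"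
        unfolding idm_def by (intro sum.cong) auto
      thus ?thesis using a by (simp add: sd2)
    qed
    ultimately show ?thesis by simp
  qed
  show ?thesis
  proof (intro allI ballI)
    fix p :: "nat \<Rightarrow> real" and a assume a: "a \<in> {1..2*N}"
    have "(\<Sum>b\<in>{1..2*N}. Lw N E1 E2 w a b * (\<Sum>k\<in>{1..2*N}. p k * v b k)) =
        (\<Sum>k\<in>{1..2*N}. p k * (\<Sum>b\<in>{1..2*N}. Lw N E1 E2 w a b * v b k))"
    proof -
      have "(\<Sum>b\<in>{1..2*N}. Lw N E1 E2 w a b * (\<Sum>k\<in>{1..2*N}. p k * v b k)) =
          (\<Sum>b\<in>{1..2*N}. \<Sum>k\<in>{1..2*N}. p k * (Lw N E1 E2 w a b * v b k))"
        by (simp add: sum_distrib_left mult.left_commute)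
      also have "\<dots> = (\<Sum>k\<in>{1..2*N}. \<Sum>b\<in>{1..2*N}. p k * (Lw N E1 E2 w a b * v b k))"
        by (rule sum.swap)
      finally show ?thesis by (simp only: sum_distrib_left)
    qed
    also have "\<dots> = (\<Sum>k\<in>{1..2*N}. p k * (lam * v a k))"
      using eig[OF a] by (intro sum.cong) auto
    also have "\<dots> = lam * (\<Sum>k\<in>{1..2*N}. p k * v a k)"
      by (simp add: sum_distrib_left algebra_simps)
    finally show "(\<Sum>b\<in>{1..2*N}. Lw N E1 E2 w a b * (\<Sum>k\<in>{1..2*N}. p k * v b k)) = lam * (\<Sum>k\<in>{1..2*N}. p k * v a k)" .
  qed
qed


end
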